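(* Let $\boldsymbol{\theta}$ be a parameter (scalar or vector) whose treatment effect $\theta=\theta(\boldsymbol{\theta})$ is real-valued, let $\delta\in\mathbb{R}$ be a clinical margin and $c\in(0,1)$. Let $\mathcal{E}=\{\theta>\delta\}$ and $\bar{\mathcal{E}}=\{\theta\le\delta\}$. Let $\pi_{\mathrm{a}}$ (analysis prior) and $\pi_{\mathrm{d}}$ (design prior) be priors on $\boldsymbol{\theta}$, each giving positive probability to both $\mathcal{E}$ and $\bar{\mathcal{E}}$, and let data $\mathcal{D}$ have likelihood $f(\mathcal{D}\mid\boldsymbol{\theta})$. Assume $\pi_{\mathrm{a}}(\boldsymbol{\theta}\mid\mathcal{E})=\pi_{\mathrm{d}}(\boldsymbol{\theta}\mid\mathcal{E})$ and $\pi_{\mathrm{a}}(\boldsymbol{\theta}\mid\bar{\mathcal{E}})=\pi_{\mathrm{d}}(\boldsymbol{\theta}\mid\bar{\mathcal{E}})$. Define the success indicator $\mathcal{S}(\mathcal{D};c)=\mathbb{I}\{\Pr_{\mathrm{a}}(\mathcal{E}\mid\mathcal{D})>c\}$, and the probability of incorrect decision $\mathrm{PID}(c)=\Pr_{\mathrm{d}}(\bar{\mathcal{E}}\mid\mathcal{S}(\mathcal{D};c)=1)$, computed under the joint model $\boldsymbol{\theta}\sim\pi_{\mathrm{d}}$, $\mathcal{D}\mid\boldsymbol{\theta}\sim f$ (assuming $\Pr_{\mathrm{d}}(\mathcal{S}=1)>0$). Let $OE_{\mathrm{d}}=\Pr_{\mathrm{d}}(\mathcal{E})/\Pr_{\mathrm{d}}(\bar{\mathcal{E}})$,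 $OE_{\mathrm{a}}=\Pr_{\mathrm{a}}(\mathcal{E})/\Pr_{\mathrm{a}}(\bar{\mathcal{E}})$ and $R=OE_{\mathrm{d}}/OE_{\mathrm{a}}$. Then $$\mathrm{PID}(c)\le\frac{1}{R\left(\frac{c}{1-c}\right)+1}.$$
   Context: $\Pr_{\mathrm{a}}(\cdot\mid\mathcal{D})$ denotes the posterior under the analysis prior, $\Pr_{\mathrm{a}}$ and $\Pr_{\mathrm{d}}$ prior probabilities under the analysis and design priors; $\pi(\boldsymbol{\theta}\mid\mathcal{E})$ denotes the prior conditioned on the event $\mathcal{E}$. *)

theory Defs
  imports "HOL-Probability.Probability"
begin

text \<open>Data space: measure space mu (type 'd); the likelihood f t D is a density of
  the data D w.r.t. mu, given the parameter t. theta is the treatment-effect map.\<close>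

definition event_E :: "'p measure \<Rightarrow> ('p \<Rightarrow> real) \<Rightarrow> real \<Rightarrow> 'p set" where
  "event_E P theta delta = {t \<in> space P. theta t > delta}"

definition event_Ebar :: "'p measure \<Rightarrow> ('p \<Rightarrow> real) \<Rightarrow> real \<Rightarrow> 'p set" where
  "event_Ebar P theta delta = {t \<in> space P. theta t \<le> delta}"

definition posterior_E :: "'p measure \<Rightarrow> ('p \<Rightarrow> 'd \<Rightarrow> real) \<Rightarrow> ('p \<Rightarrow> real) \<Rightarrow> real \<Rightarrow> 'd \<Rightarrow> real" where
  "posterior_E P f theta delta D =
     (\<integral>t. indicator (event_E P theta delta) t * f t D \<partial>P) / (\<integral>t. f t D \<partial>P)"

definition success_set :: "'p measure \<Rightarrow> 'd measure \<Rightarrow> ('p \<Rightarrow> 'd \<Rightarrow> real) \<Rightarrow> ('p \<Rightarrow> real) \<Rightarrow> real \<Rightarrow> real \<Rightarrow> 'd set" where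
  "success_set Pa mu f theta delta c = {D \<in> space mu. posterior_E Pa f theta delta D > c}"

definition joint :: "'p measure \<Rightarrow> 'd measure \<Rightarrow> ('p \<Rightarrow> 'd \<Rightarrow> real) \<Rightarrow> ('p \<times> 'd) measure" where
  "joint P mu f = density (P \<Otimes>\<^sub>M mu) (\<lambda>x. ennreal (f (fst x) (snd x)))"

definition PID :: "'p measure \<Rightarrow> 'p measure \<Rightarrow> 'd measure \<Rightarrow> ('p \<Rightarrow> 'd \<Rightarrow> real) \<Rightarrow> ('p \<Rightarrow> real) \<Rightarrow> real \<Rightarrow> real \<Rightarrow> real" where
  "PID Pa Pd mu f theta delta c =
     measure (joint Pd mu f) (event_Ebar Pd theta delta \<times> success_set Pa mu f theta delta c)
     / measure (joint Pd mu f) (space Pd \<times> success_set Pa mu f theta delta c)"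

definition odds_E :: "'p measure \<Rightarrow> ('p \<Rightarrow> real) \<Rightarrow> real \<Rightarrow> real" where
  "odds_E P theta delta = measure P (event_E P theta delta) / measure P (event_Ebar P theta delta)"

end

theory Submission imports Defs begin

lemma cond_nn:
  assumes M: "prob_space M" and N: "prob_space N" and sets: "sets M = sets N"
    and E: "E \<in> sets N" and pM: "measure M E > 0" and pN: "measure N E > 0"
    and cond: "\<And>A. A \<in> sets N \<Longrightarrow> measure M (A \<inter> E) / measure M E = measure N (A \<inter> E) / measure N E"
    and g: "g \<in> borel_measurable N"
  shows "(\<integral>\<^sup>+t. indicator E t * g t \<partial>M) = ennreal (measure M E / measure N E) * (\<integral>\<^sup>+t. indicator E t * g t \<partial>N)"
proof -
  interpret M: prob_space M by (rule M)
  interpret N: prob_space N by (rule N)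
  define a where "a = measure M E"
  define b where "b = measure N E"
  have EM: "E \<in> sets M" using E sets by simp
  have gM: "g \<in> borel_measurable M" unfolding measurable_cong_sets[OF sets refl] by (rule g)
  have eq: "density M (\<lambda>t. ennreal (1/a) * indicator E t) = density N (\<lambda>t. ennreal (1/b) * indicator E t)"
  proof (rule measure_eqI)
    show "sets (density M (\<lambda>t. ennreal (1/a) * indicator E t)) = sets (density N (\<lambda>t. ennreal (1/b) * indicator E t))"
      using sets by simp
    fix A assume "A \<in> sets (density M (\<lambda>t. ennreal (1/a) * indicator E t))"
    hence A: "A \<in> sets N" and AM: "A \<in> sets M" using sets by auto
    have "emeasure (density M (\<lambda>t. ennreal (1/a) * indicator E t)) A
        = (\<integral>\<^sup>+ t. ennreal (1/a) * indicator (A \<inter> E) t \<partial>M)"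
      using EM AM by (subst emeasure_density) (auto intro!: nn_integral_cong simp: indicator_def)
    also have "\<dots> = ennreal (1/a) * emeasure M (A \<inter> E)"
      using EM AM by (intro nn_integral_cmult_indicator) auto
    also have "\<dots> = ennreal (measure M (A \<inter> E) / a)"
      using M.emeasure_eq_measure by (simp add: ennreal_mult'' divide_inverse mult.commute)
    also have "\<dots> = ennreal (measure N (A \<inter> E) / b)"
      using cond[OF A] a_def b_def by simp
    also have "\<dots> = ennreal (1/b) * emeasure N (A \<inter> E)"
      using N.emeasure_eq_measure by (simp add: ennreal_mult'' divide_inverse mult.commute)
    also have "\<dots> = (\<integral>\<^sup>+ t. ennreal (1/b) * indicator (A \<inter> E) t \<partial>N)"
      using E A by (intro nn_integral_cmult_indicator[symmetric]) auto
    also have "\<dots> = emeasure (density N (\<lambda>t. ennreal (1/b) * indicator E t)) A"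
      using E A by (subst emeasure_density) (auto intro!: nn_integral_cong simp: indicator_def)
    finally show "emeasure (density M (\<lambda>t. ennreal (1/a) * indicator E t)) A
        = emeasure (density N (\<lambda>t. ennreal (1/b) * indicator E t)) A" .
  qed
  have "ennreal (1/a) * (\<integral>\<^sup>+t. indicator E t * g t \<partial>M) = (\<integral>\<^sup>+t. ennreal (1/a) * indicator E t * g t \<partial>M)"
    using EM gM by (subst nn_integral_cmult[symmetric]) (auto simp: mult.assoc)
  also have "\<dots> = integral\<^sup>N (density M (\<lambda>t. ennreal (1/a) * indicator E t)) g"
    using EM gM by (subst nn_integral_density) auto
  also have "\<dots> = integral\<^sup>N (density N (\<lambda>t. ennreal (1/b) * indicator E t)) g"
    using eq by simp
  also have "\<dots> = (\<integral>\<^sup>+t. ennreal (1/b) * indicator E t * g t \<partial>N)"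
    using E g by (subst nn_integral_density) auto
  also have "\<dots> = ennreal (1/b) * (\<integral>\<^sup>+t. indicator E t * g t \<partial>N)"
    using E g by (subst nn_integral_cmult[symmetric]) (auto simp: mult.assoc)
  finally have *: "ennreal (1/a) * (\<integral>\<^sup>+t. indicator E t * g t \<partial>M) = ennreal (1/b) * (\<integral>\<^sup>+t. indicator E t * g t \<partial>N)" .
  have "(\<integral>\<^sup>+t. indicator E t * g t \<partial>M) = ennreal a * (ennreal (1/a) * (\<integral>\<^sup>+t. indicator E t * g t \<partial>M))"
    using pM a_def by (simp add: mult.assoc[symmetric] ennreal_mult''[symmetric])
  also have "\<dots> = ennreal a * ennreal (1/b) * (\<integral>\<^sup>+t. indicator E t * g t \<partial>N)"
    using * by (simp add: mult.assoc)
  also have "\<dots> = ennreal (a / b) * (\<integral>\<^sup>+t. indicator E t * g t \<partial>N)"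
    using pM pN a_def b_def by (simp add: ennreal_mult[symmetric] divide_inverse)
  finally show ?thesis using a_def b_def by simp
qed


lemma final_arith:
  fixes mE mB pa qa pd qd c :: real
  assumes "0 < c" "c < 1" "0 < pa" "0 < qa" "0 < pd" "0 < qd" "0 \<le> mE" "0 \<le> mB" "0 < mE + mB"
    and h: "c * (qa / qd) * mB \<le> (1 - c) * (pa / pd) * mE"
  shows "mB / (mE + mB) \<le> 1 / ((pd / qd) / (pa / qa) * (c / (1 - c)) + 1)"
proof -
  define K where "K = (pd / qd) / (pa / qa) * (c / (1 - c))"
  have K0: "K \<ge> 0" using assms unfolding K_def by simp
  have "K = (c * (qa / qd)) * (pd / (pa * (1 - c)))" using assms unfolding K_def by (simp add: field_simps)
  hence "mB * K = (c * (qa / qd) * mB) * (pd / (pa * (1 - c)))" by simp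
  also have "\<dots> \<le> ((1 - c) * (pa / pd) * mE) * (pd / (pa * (1 - c)))"
    using h assms by (intro mult_right_mono) auto
  also have "\<dots> = mE" using assms by (simp add: field_simps)
  finally have "mB * K \<le> mE" .
  hence "mB * (K + 1) \<le> mE + mB" by (simp add: algebra_simps)
  hence "mB / (mE + mB) \<le> 1 / (K + 1)" using assms K0 by (simp add: field_simps)
  thus ?thesis unfolding K_def .
qed

theorem theorem1:
  fixes Pa Pd :: "'p measure" and mu :: "'d measure"
    and f :: "'p \<Rightarrow> 'd \<Rightarrow> real" and theta :: "'p \<Rightarrow> real"
    and delta c :: real
  assumes Pa: "prob_space Pa" and Pd: "prob_space Pd"
    and sets_eq: "sets Pa = sets Pd"
    and mu: "sigma_finite_measure mu"
    and theta_meas: "theta \<in> borel_measurable Pd"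
    and f_meas: "(\<lambda>x. f (fst x) (snd x)) \<in> borel_measurable (Pd \<Otimes>\<^sub>M mu)"
    and f_nonneg: "\<And>t D. t \<in> space Pd \<Longrightarrow> D \<in> space mu \<Longrightarrow> f t D \<ge> 0"
    and f_density: "\<And>t. t \<in> space Pd \<Longrightarrow> (\<integral>\<^sup>+ D. ennreal (f t D) \<partial>mu) = 1"
    and c: "0 < c" "c < 1"
    and Pa_E: "measure Pa (event_E Pd theta delta) > 0"
    and Pa_Ebar: "measure Pa (event_Ebar Pd theta delta) > 0"
    and Pd_E: "measure Pd (event_E Pd theta delta) > 0"
    and Pd_Ebar: "measure Pd (event_Ebar Pd theta delta) > 0"
    and cond_E: "\<And>A. A \<in> sets Pd \<Longrightarrow>
        measure Pa (A \<inter> event_E Pd theta delta) / measure Pa (event_E Pd theta delta)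
      = measure Pd (A \<inter> event_E Pd theta delta) / measure Pd (event_E Pd theta delta)"
    and cond_Ebar: "\<And>A. A \<in> sets Pd \<Longrightarrow>
        measure Pa (A \<inter> event_Ebar Pd theta delta) / measure Pa (event_Ebar Pd theta delta)
      = measure Pd (A \<inter> event_Ebar Pd theta delta) / measure Pd (event_Ebar Pd theta delta)"
    and success_pos: "measure (joint Pd mu f) (space Pd \<times> success_set Pa mu f theta delta c) > 0"
  shows "PID Pa Pd mu f theta delta c
         \<le> 1 / ((odds_E Pd theta delta / odds_E Pa theta delta) * (c / (1 - c)) + 1)"
proof -
  interpret Pa: prob_space Pa by (rule Pa)
  interpret Pd: prob_space Pd by (rule Pd)
  interpret mu: sigma_finite_measure mu by (rule mu)
  interpret PM: pair_sigma_finite Pd mu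
    unfolding pair_sigma_finite_def using Pd.sigma_finite_measure_axioms mu by auto
  define E where "E = event_E Pd theta delta"
  define B where "B = event_Ebar Pd theta delta"
  define S where "S = success_set Pa mu f theta delta c"
  define J where "J = joint Pd mu f"
  have spaceP: "space Pa = space Pd" using sets_eq by (rule sets_eq_imp_space_eq)
  note theta_meas[measurable]
  have E_sets[measurable]: "E \<in> sets Pd" unfolding E_def event_E_def by measurable
  have B_sets[measurable]: "B \<in> sets Pd" unfolding B_def event_Ebar_def by measurable
  have EB_disj: "E \<inter> B = {}" and EB_un: "E \<union> B = space Pd"
    unfolding E_def B_def event_E_def event_Ebar_def by auto
  have E_a: "event_E Pa theta delta = E" and B_a: "event_Ebar Pa theta delta = B"
    unfolding E_def B_def event_E_def event_Ebar_def spaceP by auto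
  note f_meas[measurable]
  have fD: "(\<lambda>t. f t D) \<in> borel_measurable Pd" if "D \<in> space mu" for D
    using measurable_compose[OF measurable_Pair2'[OF that] f_meas] by simp
  have fD_a: "(\<lambda>t. ennreal (f t D)) \<in> borel_measurable Pa" if "D \<in> space mu" for D
    unfolding measurable_cong_sets[OF sets_eq refl] using fD[OF that] by measurable
  have f_swap[measurable]: "(\<lambda>x. f (snd x) (fst x)) \<in> borel_measurable (mu \<Otimes>\<^sub>M Pd)"
    using measurable_pair_swap[OF f_meas] by (simp add: case_prod_beta')
  have dmeas: "(\<lambda>D. \<integral>\<^sup>+ t. indicator A t * ennreal (f t D) \<partial>Pd) \<in> borel_measurable mu"
    if [measurable]: "A \<in> sets Pd" for A
  proof -
    have "(\<lambda>(D, t). indicator A t * ennreal (f t D)) \<in> borel_measurable (mu \<Otimes>\<^sub>M Pd)"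
      using f_swap by (simp add: case_prod_beta') measurable
    thus ?thesis by (rule Pd.borel_measurable_nn_integral)
  qed
  have sets_J: "sets J = sets (Pd \<Otimes>\<^sub>M mu)" unfolding J_def joint_def by simp
  have JPS: "prob_space J"
  proof
    have "emeasure J (space J) = (\<integral>\<^sup>+ x. ennreal (f (fst x) (snd x)) \<partial>(Pd \<Otimes>\<^sub>M mu))"
      unfolding J_def joint_def
      by (subst emeasure_density) (auto intro!: nn_integral_cong)
    also have "\<dots> = (\<integral>\<^sup>+ t. \<integral>\<^sup>+ D. ennreal (f t D) \<partial>mu \<partial>Pd)"
      by (subst mu.nn_integral_fst[symmetric]) auto
    also have "\<dots> = (\<integral>\<^sup>+ t. 1 \<partial>Pd)"
      by (intro nn_integral_cong) (simp add: f_density)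
    also have "\<dots> = 1" by (simp add: Pd.emeasure_space_1)
    finally show "emeasure J (space J) = 1" .
  qed
  interpret J: prob_space J by (rule JPS)
  have S_sub: "S \<subseteq> space mu" unfolding S_def success_set_def by auto
  have S_sets[measurable]: "S \<in> sets mu"
  proof -
    have "space Pd \<times> S \<in> sets (Pd \<Otimes>\<^sub>M mu)"
      using success_pos measure_notin_sets[of "space Pd \<times> S" J] sets_J
      unfolding S_def J_def by (metis less_irrefl)
    obtain t0 where t0: "t0 \<in> space Pd" using Pd.not_empty by blast
    have "Pair t0 -` (space Pd \<times> S) = S" using t0 by auto
    with sets_Pair1[OF \<open>space Pd \<times> S \<in> sets (Pd \<Otimes>\<^sub>M mu)\<close>, of t0] show ?thesis by simp
  qed
  have Jprod: "emeasure J (A \<times> S) = (\<integral>\<^sup>+ D. indicator S D * (\<integral>\<^sup>+ t. indicator A t * ennreal (f t D) \<partial>Pd) \<partial>mu)"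
    if A[measurable]: "A \<in> sets Pd" for A
  proof -
    have "emeasure J (A \<times> S) = (\<integral>\<^sup>+ x. ennreal (f (fst x) (snd x)) * indicator (A \<times> S) x \<partial>(Pd \<Otimes>\<^sub>M mu))"
      unfolding J_def joint_def by (subst emeasure_density) auto
    also have "\<dots> = (\<integral>\<^sup>+ D. \<integral>\<^sup>+ t. ennreal (f t D) * indicator (A \<times> S) (t, D) \<partial>Pd \<partial>mu)"
      by (subst PM.nn_integral_snd[symmetric]) auto
    also have "\<dots> = (\<integral>\<^sup>+ D. indicator S D * (\<integral>\<^sup>+ t. indicator A t * ennreal (f t D) \<partial>Pd) \<partial>mu)"
      by (intro nn_integral_cong, rename_tac D, case_tac "D \<in> S")
        (auto simp: indicator_def intro!: nn_integral_cong)
    finally show ?thesis .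
  qed
  have pw: "ennreal c * (\<integral>\<^sup>+ t. indicator B t * ennreal (f t D) \<partial>Pa)
      \<le> ennreal (1 - c) * (\<integral>\<^sup>+ t. indicator E t * ennreal (f t D) \<partial>Pa)" if D: "D \<in> S" for D
  proof -
    have Dm: "D \<in> space mu" and post: "posterior_E Pa f theta delta D > c"
      using D unfolding S_def success_set_def by auto
    note g[measurable] = fD_a[OF Dm]
    have Ea[measurable]: "E \<in> sets Pa" and Ba[measurable]: "B \<in> sets Pa" using sets_eq by auto
    define TE where "TE = (\<integral>\<^sup>+ t. indicator E t * ennreal (f t D) \<partial>Pa)"
    define TB where "TB = (\<integral>\<^sup>+ t. indicator B t * ennreal (f t D) \<partial>Pa)"
    have "(\<integral>\<^sup>+ t. ennreal (f t D) \<partial>Pa)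
        = (\<integral>\<^sup>+ t. indicator E t * ennreal (f t D) + indicator B t * ennreal (f t D) \<partial>Pa)"
    proof (intro nn_integral_cong)
      fix t assume "t \<in> space Pa"
      hence "t \<in> E \<union> B" using EB_un spaceP by simp
      thus "ennreal (f t D) = indicator E t * ennreal (f t D) + indicator B t * ennreal (f t D)"
        using EB_disj by (auto simp: indicator_def)
    qed
    also have "\<dots> = TE + TB" unfolding TE_def TB_def by (rule nn_integral_add) auto
    finally have tot: "(\<integral>\<^sup>+ t. ennreal (f t D) \<partial>Pa) = TE + TB" .
    have nonneg: "AE t in Pa. 0 \<le> f t D" using f_nonneg Dm spaceP by (intro AE_I2) auto
    have fDa[measurable]: "(\<lambda>t. f t D) \<in> borel_measurable Pa"
      unfolding measurable_cong_sets[OF sets_eq refl] using fD[OF Dm] .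
    have i1: "integral\<^sup>L Pa (\<lambda>t. f t D) = enn2real (TE + TB)"
      using nonneg by (subst integral_eq_nn_integral) (auto simp: tot)
    have i2: "integral\<^sup>L Pa (\<lambda>t. indicator E t * f t D) = enn2real TE"
    proof -
      have "integral\<^sup>L Pa (\<lambda>t. indicator E t * f t D) = enn2real (\<integral>\<^sup>+ t. ennreal (indicator E t * f t D) \<partial>Pa)"
        using nonneg by (intro integral_eq_nn_integral) (auto simp: indicator_def)
      also have "(\<integral>\<^sup>+ t. ennreal (indicator E t * f t D) \<partial>Pa) = TE"
        unfolding TE_def by (intro nn_integral_cong) (auto simp: indicator_def)
      finally show ?thesis .
    qed
    have post': "c < enn2real TE / enn2real (TE + TB)"
      using post unfolding posterior_E_def E_a i1 i2 .
    have fin: "TE + TB \<noteq> \<top>"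
    proof
      assume top: "TE + TB = \<top>"
      have "enn2real (TE + TB) = 0" by (simp only: top enn2real_top)
      thus False using post' c by simp
    qed
    hence "TE \<noteq> \<top>" "TB \<noteq> \<top>" by auto
    then obtain e b where e: "TE = ennreal e" "0 \<le> e" and b: "TB = ennreal b" "0 \<le> b"
      by (metis ennreal_cases)
    have "TE + TB = ennreal (e + b)" using e b by (simp add: ennreal_plus)
    hence "enn2real (TE + TB) = e + b" using e b by (metis enn2real_ennreal add_nonneg_nonneg)
    moreover have "enn2real TE = e" using e by simp
    ultimately have "c < e / (e + b)" using post' by simp
    moreover have "e + b \<noteq> 0" using \<open>c < e / (e + b)\<close> c by auto
    hence "e + b > 0" using e b by simp
    ultimately have "c * (e + b) < e" by (simp add: field_simps)
    hence "c * b \<le> (1 - c) * e" by (simp add: algebra_simps)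
    hence "ennreal (c * b) \<le> ennreal ((1 - c) * e)" by (rule ennreal_leI)
    moreover have "ennreal (c * b) = ennreal c * TB" using b c by (simp add: ennreal_mult)
    moreover have "ennreal ((1 - c) * e) = ennreal (1 - c) * TE" using e c by (simp add: ennreal_mult)
    ultimately have "ennreal c * TB \<le> ennreal (1 - c) * TE" by simp
    thus ?thesis unfolding TE_def TB_def .
  qed
  define pa where "pa = measure Pa E"
  define qa where "qa = measure Pa B"
  define pd where "pd = measure Pd E"
  define qd where "qd = measure Pd B"
  have pa0: "pa > 0" and qa0: "qa > 0" and pd0: "pd > 0" and qd0: "qd > 0"
    using Pa_E Pa_Ebar Pd_E Pd_Ebar unfolding pa_def qa_def pd_def qd_def E_def B_def by auto
  have cE: "(\<integral>\<^sup>+ t. indicator E t * ennreal (f t D) \<partial>Pa)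
      = ennreal (pa / pd) * (\<integral>\<^sup>+ t. indicator E t * ennreal (f t D) \<partial>Pd)" if "D \<in> space mu" for D
    unfolding pa_def pd_def
    by (rule cond_nn[OF Pa Pd sets_eq E_sets Pa_E[folded E_def] Pd_E[folded E_def] cond_E[folded E_def]])
      (simp_all add: measurable_compose[OF fD[OF that] measurable_ennreal])
  have cB: "(\<integral>\<^sup>+ t. indicator B t * ennreal (f t D) \<partial>Pa)
      = ennreal (qa / qd) * (\<integral>\<^sup>+ t. indicator B t * ennreal (f t D) \<partial>Pd)" if "D \<in> space mu" for D
    unfolding qa_def qd_def
    by (rule cond_nn[OF Pa Pd sets_eq B_sets Pa_Ebar[folded B_def] Pd_Ebar[folded B_def] cond_Ebar[folded B_def]])
      (simp_all add: measurable_compose[OF fD[OF that] measurable_ennreal])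
  define dE where "dE D = (\<integral>\<^sup>+ t. indicator E t * ennreal (f t D) \<partial>Pd)" for D
  define dB where "dB D = (\<integral>\<^sup>+ t. indicator B t * ennreal (f t D) \<partial>Pd)" for D
  have dE_m[measurable]: "dE \<in> borel_measurable mu" unfolding dE_def by (rule dmeas) simp
  have dB_m[measurable]: "dB \<in> borel_measurable mu" unfolding dB_def by (rule dmeas) simp
  have "ennreal c * ennreal (qa / qd) * emeasure J (B \<times> S)
      = (\<integral>\<^sup>+ D. ennreal c * ennreal (qa / qd) * (indicator S D * dB D) \<partial>mu)"
    unfolding Jprod[OF B_sets] dB_def[symmetric] by (subst nn_integral_cmult) auto
  also have "\<dots> \<le> (\<integral>\<^sup>+ D. ennreal (1 - c) * ennreal (pa / pd) * (indicator S D * dE D) \<partial>mu)"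
  proof (intro nn_integral_mono)
    fix D assume Dm: "D \<in> space mu"
    show "ennreal c * ennreal (qa / qd) * (indicator S D * dB D)
        \<le> ennreal (1 - c) * ennreal (pa / pd) * (indicator S D * dE D)"
    proof (cases "D \<in> S")
      case True
      have "ennreal c * ennreal (qa / qd) * dB D \<le> ennreal (1 - c) * ennreal (pa / pd) * dE D"
        using pw[OF True] unfolding cE[OF Dm] cB[OF Dm] dE_def dB_def by (simp add: mult.assoc)
      thus ?thesis using True by simp
    qed simp
  qed
  also have "\<dots> = ennreal (1 - c) * ennreal (pa / pd) * emeasure J (E \<times> S)"
    unfolding Jprod[OF E_sets] dE_def[symmetric] by (subst nn_integral_cmult) auto
  finally have ineq: "ennreal c * ennreal (qa / qd) * emeasure J (B \<times> S)
      \<le> ennreal (1 - c) * ennreal (pa / pd) * emeasure J (E \<times> S)" .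
  define mE where "mE = measure J (E \<times> S)"
  define mB where "mB = measure J (B \<times> S)"
  have qq: "qa / qd \<ge> 0" "pa / pd \<ge> 0" "1 - c \<ge> 0" using qa0 qd0 pa0 pd0 c by auto
  have l1: "ennreal c * ennreal (qa / qd) * ennreal mB = ennreal (c * (qa / qd) * mB)"
    using qq by (metis ennreal_mult'' measure_nonneg mB_def)
  have l2: "ennreal (1 - c) * ennreal (pa / pd) * ennreal mE = ennreal ((1 - c) * (pa / pd) * mE)"
    using qq by (metis ennreal_mult'' measure_nonneg mE_def)
  have "ennreal (c * (qa / qd) * mB) \<le> ennreal ((1 - c) * (pa / pd) * mE)"
    using ineq unfolding J.emeasure_eq_measure mE_def[symmetric] mB_def[symmetric] l1 l2 .
  moreover have "0 \<le> (1 - c) * (pa / pd) * mE"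
    unfolding mE_def by (intro mult_nonneg_nonneg qq measure_nonneg)
  ultimately have key: "c * (qa / qd) * mB \<le> (1 - c) * (pa / pd) * mE"
    using ennreal_le_iff by blast
  have ES[measurable]: "E \<times> S \<in> sets J" and BS[measurable]: "B \<times> S \<in> sets J"
    unfolding sets_J by auto
  have un: "space Pd \<times> S = (E \<times> S) \<union> (B \<times> S)" using EB_un by auto
  have msum: "measure J (space Pd \<times> S) = mE + mB"
    unfolding un mE_def mB_def using EB_disj by (intro J.finite_measure_Union ES BS) auto
  have PIDeq: "PID Pa Pd mu f theta delta c = mB / (mE + mB)"
    unfolding PID_def msum[unfolded J_def S_def] mB_def J_def B_def S_def ..
  have oddsd: "odds_E Pd theta delta = pd / qd" unfolding odds_E_def pd_def qd_def E_def B_def ..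
  have oddsa: "odds_E Pa theta delta = pa / qa" unfolding odds_E_def E_a B_a pa_def qa_def ..
  show ?thesis unfolding PIDeq oddsd oddsa
    by (rule final_arith[OF c pa0 qa0 pd0 qd0 _ _ _ key])
      (use msum success_pos in \<open>auto simp: mE_def mB_def J_def S_def\<close>)
qed

end
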